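(* Let $G$ and $H$ be undirected graphs with nonnegative edge weights on the same vertex set of $n$ vertices, with adjacency matrices $A_G,A_H$, degree matrices $D_G,D_H$, and Laplacian matrices $L_G=D_G-A_G$ and $L_H=D_H-A_H$. Then \[ \|A_G-A_H\|\leq\sqrt{n}\,\|L_G-L_H\|, \] where $\|\cdot\|$ denotes the spectral (2-)norm.
   Context: For a graph $G$ on vertices $v_1,\dots,v_n$ with edge weights $w_{ij}\geq0$ (and $w_{ij}=0$ for non-edges), $(A_G)_{ij}=w_{ij}$ for $i\neq j$, $(A_G)_{ii}=0$, and $D_G$ is diagonal with $(D_G)_{ii}=\sum_j w_{ij}$. *)

theory Defs
  imports "HOL-Analysis.Analysis"
begin

text \<open>A weighted graph on the finite vertex type 'n is given by its weight function
  w :: 'n => 'n => real (w i j = 0 for non-edges).\<close>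

definition adj_mat :: "('n::finite \<Rightarrow> 'n \<Rightarrow> real) \<Rightarrow> real^'n^'n" where
  "adj_mat w = (\<chi> i j. if i = j then 0 else w i j)"

definition deg_mat :: "('n::finite \<Rightarrow> 'n \<Rightarrow> real) \<Rightarrow> real^'n^'n" where
  "deg_mat w = (\<chi> i j. if i = j then (\<Sum>k\<in>UNIV. w i k) else 0)"

definition lap_mat :: "('n::finite \<Rightarrow> 'n \<Rightarrow> real) \<Rightarrow> real^'n^'n" where
  "lap_mat w = deg_mat w - adj_mat w"

definition spec_norm :: "real^'n::finite^'m::finite \<Rightarrow> real" where
  "spec_norm M = onorm (\<lambda>x. M *v x)"

end

theory Submission
  imports Defs
begin

lemma norm_sq_vec: "(norm (x::real^'k))^2 = (\<Sum>i\<in>UNIV. (x$i)^2)"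
  unfolding power2_norm_eq_inner inner_vec_def by (simp add: power2_eq_square)

definition FF :: "real^'n::finite^'m::finite \<Rightarrow> real" where
  "FF M = (\<Sum>i\<in>UNIV. \<Sum>j\<in>UNIV. (M$i$j)^2)"

lemma onorm_le_FF: "onorm ((*v) (M::real^'n::finite^'m::finite)) \<le> sqrt (FF M)"
proof (rule onorm_le)
  fix x :: "real^'n"
  have "(norm (M *v x))^2 = (\<Sum>i\<in>UNIV. ((M *v x)$i)^2)" by (rule norm_sq_vec)
  also have "\<dots> \<le> (\<Sum>i\<in>UNIV. (norm (M$i))^2 * (norm x)^2)"
  proof (rule sum_mono)
    fix i
    have "\<bar>(M *v x) $ i\<bar> \<le> norm(M $ i) * norm x"
      by (simp add: matrix_mult_dot Cauchy_Schwarz_ineq2)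
    hence "\<bar>(M *v x) $ i\<bar>^2 \<le> (norm(M $ i) * norm x)^2"
      by (intro power_mono) auto
    thus "((M *v x)$i)^2 \<le> (norm (M$i))^2 * (norm x)^2" by (simp add: power_mult_distrib)
  qed
  also have "\<dots> = FF M * (norm x)^2"
    by (simp add: FF_def norm_sq_vec sum_distrib_right)
  finally have "(norm (M *v x))^2 \<le> (sqrt (FF M) * norm x)^2"
    by (simp add: power_mult_distrib FF_def sum_nonneg)
  thus "norm (M *v x) \<le> sqrt (FF M) * norm x"
    by (rule power2_le_imp_le) (simp add: FF_def sum_nonneg)
qed

lemma FF_le_onorm: "FF (M::real^'n::finite^'m::finite) \<le> real CARD('n) * (onorm ((*v) M))^2"
proof -
  have "FF M = (\<Sum>j\<in>UNIV. \<Sum>i\<in>UNIV. (M$i$j)^2)"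
    unfolding FF_def by (rule sum.swap)
  also have "\<dots> = (\<Sum>j\<in>UNIV. (norm (column j M))^2)"
    by (simp add: norm_sq_vec column_def)
  also have "\<dots> \<le> (\<Sum>j\<in>(UNIV::'n set). (onorm ((*v) M))^2)"
    by (rule sum_mono, rule power_mono[OF norm_column_le_onorm]) auto
  also have "\<dots> = real CARD('n) * (onorm ((*v) M))^2" by simp
  finally show ?thesis .
qed

theorem lemma2:
  fixes wG wH :: "'n::finite \<Rightarrow> 'n \<Rightarrow> real"
  assumes "\<And>i j. wG i j \<ge> 0" and "\<And>i j. wG i j = wG j i" and "\<And>i. wG i i = 0"
      and "\<And>i j. wH i j \<ge> 0" and "\<And>i j. wH i j = wH j i" and "\<And>i. wH i i = 0"
  shows "spec_norm (adj_mat wG - adj_mat wH)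
           \<le> sqrt (real CARD('n)) * spec_norm (lap_mat wG - lap_mat wH)"
proof -
  let ?A = "adj_mat wG - adj_mat wH" and ?L = "lap_mat wG - lap_mat wH"
  have ent: "(?A$i$j)^2 \<le> (?L$i$j)^2" for i j
    by (cases "i = j") (simp_all add: adj_mat_def lap_mat_def deg_mat_def power2_commute)
  have "FF ?A \<le> FF ?L"
    unfolding FF_def by (intro sum_mono ent)
  also have "\<dots> \<le> real CARD('n) * (onorm ((*v) ?L))^2" by (rule FF_le_onorm)
  finally have "sqrt (FF ?A) \<le> sqrt (real CARD('n) * (onorm ((*v) ?L))^2)" by simp
  also have "\<dots> = sqrt (real CARD('n)) * onorm ((*v) ?L)"
    by (simp add: real_sqrt_mult onorm_pos_le)
  finally show ?thesis
    unfolding spec_norm_def using onorm_le_FF[of ?A] by linarith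
qed

end
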